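(* Let $n\ge2$ and let $a_1,\dots,a_{n-1}\in\mathbb C$ be fixed. For $a\in\mathbb C$ set $g_a(z)=z^n+a^n$ and $f_a(z)=z^n+a_{n-1}z^{n-1}+\cdots+a_1z+a^n$. Then $$\lim_{|a|\to+\infty}d_F\Bigl(Z\bigl(S(a_{n-1}/n)g_a\bigr),Z(f_a)\Bigr)=0.$$
   Context: For $\beta\in\mathbb C$, $(S(\beta)f)(z)=f(\beta+z)$. $Z(f)$ denotes the roots of $f$ counted with multiplicity. For multisets $A=\{u_1,\dots,u_m\}$, $B=\{v_1,\dots,v_m\}$ in $\mathbb C$, $d_F(A,B)=\min_{\sigma}\max_k|u_k-v_{\sigma(k)}|$ over permutations $\sigma$ of $\{1,\dots,m\}$. *)

theory Defs
  imports "HOL-Analysis.Analysis" "HOL-Computational_Algebra.Computational_Algebra"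
begin

definition shift_poly :: "complex \<Rightarrow> complex poly \<Rightarrow> complex poly" where
  "shift_poly \<beta> f = f \<circ>\<^sub>p [:\<beta>, 1:]"

definition enum_ms :: "complex multiset \<Rightarrow> complex list" where
  "enum_ms A = (SOME xs. mset xs = A)"

text \<open>Matching distance between multisets A = {u_1..u_m}, B = {v_1..v_m}:
  min over permutations sigma of {0..<m} of max_k |u_k - v_(sigma k)|.
  (Used only for nonempty multisets of equal size.)\<close>
definition dF :: "complex multiset \<Rightarrow> complex multiset \<Rightarrow> real" where
  "dF A B = (let u = enum_ms A; v = enum_ms B; m = size A in
     Min ((\<lambda>\<sigma>. Max ((\<lambda>k. cmod (u ! k - v ! (\<sigma> k))) ` {..<m}))
          ` {\<sigma>. \<sigma> permutes {..<m}}))"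

end

theory Submission
  imports Defs
begin

lemma enum_ms: "mset (enum_ms A) = A"
  unfolding enum_ms_def by (rule someI_ex) (rule ex_mset)

lemma dF_le:
  assumes "image_mset \<phi> B = A" "\<forall>x\<in>#B. cmod (\<phi> x - x) \<le> e" "size A > 0"
  shows "dF A B \<le> e"
proof -
  define u where "u = enum_ms A"
  define v where "v = enum_ms B"
  define m where "m = size A"
  have mu: "mset u = A" and mv: "mset v = B" by (simp_all add: u_def v_def enum_ms)
  have lv: "length v = m" using mv assms(1) m_def by (metis size_image_mset size_mset)
  have "mset u = mset (map \<phi> v)" using mu mv assms(1) by simp
  then obtain \<sigma> where s: "\<sigma> permutes {..<length (map \<phi> v)}" "permute_list \<sigma> (map \<phi> v) = u"
    by (rule mset_eq_permutation)
  have sp: "\<sigma> permutes {..<m}" using s lv by simp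
  have bnd: "cmod (u ! k - v ! (\<sigma> k)) \<le> e" if "k < m" for k
  proof -
    have sk: "\<sigma> k < m" using sp that by (meson lessThan_iff permutes_in_image)
    have "u ! k = \<phi> (v ! (\<sigma> k))"
      using s that lv sk by (auto simp: permute_list_nth)
    moreover have "v ! (\<sigma> k) \<in># B" using mv sk lv by (metis nth_mem_mset)
    ultimately show ?thesis using assms(2) by (simp add: norm_minus_commute)
  qed
  have "Max ((\<lambda>k. cmod (u ! k - v ! (\<sigma> k))) ` {..<m}) \<le> e"
    using bnd assms(3) m_def by (subst Max_le_iff) auto
  moreover have "Min ((\<lambda>\<sigma>. Max ((\<lambda>k. cmod (u ! k - v ! (\<sigma> k))) ` {..<m}))
          ` {\<sigma>. \<sigma> permutes {..<m}}) \<le> Max ((\<lambda>k. cmod (u ! k - v ! (\<sigma> k))) ` {..<m})"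
    using sp by (intro Min_le) (auto intro: finite_permutations)
  ultimately show ?thesis unfolding dF_def Let_def u_def v_def m_def by linarith
qed

lemma dF_ge:
  assumes "size A > 0"
  shows "dF A B \<ge> 0"
proof -
  define u where "u = enum_ms A"
  define v where "v = enum_ms B"
  define m where "m = size A"
  have "0 \<le> Min ((\<lambda>\<sigma>. Max ((\<lambda>k. cmod (u ! k - v ! (\<sigma> k))) ` {..<m}))
          ` {\<sigma>. \<sigma> permutes {..<m}})"
  proof (subst Min_ge_iff)
    show "finite ((\<lambda>\<sigma>. Max ((\<lambda>k. cmod (u ! k - v ! (\<sigma> k))) ` {..<m}))
          ` {\<sigma>. \<sigma> permutes {..<m}})" by (auto intro: finite_permutations)
    show "(\<lambda>\<sigma>. Max ((\<lambda>k. cmod (u ! k - v ! (\<sigma> k))) ` {..<m}))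
          ` {\<sigma>. \<sigma> permutes {..<m}} \<noteq> {}" using permutes_id by blast
    show "\<forall>a\<in>(\<lambda>\<sigma>. Max ((\<lambda>k. cmod (u ! k - v ! (\<sigma> k))) ` {..<m}))
          ` {\<sigma>. \<sigma> permutes {..<m}}. 0 \<le> a"
    proof
      fix x assume "x \<in> (\<lambda>\<sigma>. Max ((\<lambda>k. cmod (u ! k - v ! (\<sigma> k))) ` {..<m}))
          ` {\<sigma>. \<sigma> permutes {..<m}}"
      then obtain \<sigma> where "x = Max ((\<lambda>k. cmod (u ! k - v ! (\<sigma> k))) ` {..<m})" by auto
      moreover have "0 \<le> cmod (u ! 0 - v ! (\<sigma> 0))" by simp
      ultimately show "0 \<le> x" using assms m_def
        by (metis (no_types, lifting) Max_ge_iff empty_iff finite_imageI finite_lessThan image_eqI image_is_empty lessThan_iff)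
    qed
  qed
  then show ?thesis unfolding dF_def Let_def u_def v_def m_def .
qed


lemma match_image:
  fixes R S :: "complex multiset"
  assumes dist: "\<forall>r. count R r \<le> 1" and sz: "size S = size R"
   and c1: "\<forall>s\<in>#S. \<exists>r\<in>#R. cmod (s - r) \<le> e"
   and c2: "\<forall>r\<in>#R. \<exists>s\<in>#S. cmod (s - r) \<le> e"
   and sep: "\<forall>r\<in>#R. \<forall>r'\<in>#R. r \<noteq> r' \<longrightarrow> cmod (r - r') > 2*e"
  shows "\<exists>\<phi>. image_mset \<phi> S = R \<and> (\<forall>s\<in>#S. cmod (\<phi> s - s) \<le> e)"
proof -
  define \<phi> where "\<phi> s = (SOME r. r \<in># R \<and> cmod (s - r) \<le> e)" for s
  have phi: "\<phi> s \<in># R \<and> cmod (s - \<phi> s) \<le> e" if "s \<in># S" for s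
    unfolding \<phi>_def by (rule someI_ex) (use c1 that in blast)
  have uniq: "\<phi> s = r" if "s \<in># S" "r \<in># R" "cmod (s - r) \<le> e" for s r
  proof (rule ccontr)
    assume ne: "\<phi> s \<noteq> r"
    have "cmod (\<phi> s - r) \<le> cmod (s - \<phi> s) + cmod (s - r)"
      by (metis norm_diff_triangle_le norm_minus_commute order_refl)
    then have "cmod (\<phi> s - r) \<le> 2 * e" using phi[OF that(1)] that(3) by linarith
    with sep phi[OF that(1)] that(2) ne show False by force
  qed
  have sub: "R \<subseteq># image_mset \<phi> S"
  proof (rule mset_subset_eqI)
    fix r
    show "count R r \<le> count (image_mset \<phi> S) r"
    proof (cases "r \<in># R")
      case True
      then obtain s where s: "s \<in># S" "cmod (s - r) \<le> e" using c2 by blast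
      then have "r \<in># image_mset \<phi> S" using uniq True by (metis image_eqI set_image_mset)
      then have "count (image_mset \<phi> S) r > 0" by (simp only: count_greater_zero_iff)
      then show ?thesis using dist[rule_format, of r] by linarith
    next
      case False then show ?thesis by (simp add: not_in_iff)
    qed
  qed
  then obtain C where C: "image_mset \<phi> S = R + C" by (metis mset_subset_eq_exists_conv)
  then have "size C = 0" using sz by (metis size_image_mset size_union add_cancel_right_right)
  then have "image_mset \<phi> S = R" using C by simp
  moreover have "\<forall>s\<in>#S. cmod (\<phi> s - s) \<le> e" using phi by (simp add: norm_minus_commute)
  ultimately show ?thesis by blast
qed



lemma prod_mset_pow_le:
  fixes f :: "'a \<Rightarrow> real"
  assumes "\<forall>x\<in>#M. c \<le> f x" "0 \<le> c"
  shows "c ^ size M \<le> (\<Prod>x\<in>#M. f x)"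
  using assms
proof (induction M)
  case empty then show ?case by simp
next
  case (add x M)
  have "c ^ size M \<le> (\<Prod>x\<in>#M. f x)" using add by simp
  moreover have "c \<le> f x" using add by simp
  ultimately show ?case using add.prems(2)
    by (simp add: mult_mono)
qed

lemma prod_mset_nonneg':
  fixes f :: "'a \<Rightarrow> real"
  assumes "\<forall>x\<in>#M. 0 \<le> f x"
  shows "0 \<le> (\<Prod>x\<in>#M. f x)"
  using prod_mset_pow_le[of M 0 f] assms by (cases "size M") auto

lemma prod_lower:
  fixes f :: "'a \<Rightarrow> real"
  assumes "size M = Suc m" "\<forall>x\<in>#M. a \<le> f x \<and> b \<le> f x" "0 \<le> a" "0 \<le> b"
  shows "a * b ^ m \<le> (\<Prod>x\<in>#M. f x)"
proof -
  obtain x where x: "x \<in># M" using assms(1) by (metis size_empty nat.distinct(1) multiset_nonemptyE)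
  define M' where "M' = M - {#x#}"
  have M: "M = add_mset x M'" using x M'_def by simp
  have sz: "size M' = m" using assms(1) M by simp
  have "b ^ m \<le> (\<Prod>x\<in>#M'. f x)" using prod_mset_pow_le[of M' b f] assms M sz by auto
  moreover have "a \<le> f x" using assms x by auto
  ultimately have "a * b ^ m \<le> f x * (\<Prod>x\<in>#M'. f x)"
    using assms by (simp add: mult_mono)
  then show ?thesis using M by simp
qed

lemma monic_norm_poly:
  fixes p :: "complex poly"
  assumes "lead_coeff p = 1"
  shows "cmod (poly p z) = (\<Prod>r\<in>#proots p. cmod (z - r))"
proof -
  have "p = (\<Prod>x\<in>#proots p. [:-x, 1:])"
    using complex_poly_decompose_multiset[of p] assms by simp
  then have "poly p z = (\<Prod>x\<in>#proots p. poly [:-x, 1:] z)"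
    by (metis poly_prod_mset)
  also have "\<dots> = (\<Prod>x\<in>#proots p. (z - x))" by simp
  finally have eq: "poly p z = (\<Prod>x\<in>#proots p. (z - x))" .
  have "cmod (\<Prod>x\<in>#M. (z - x)) = (\<Prod>x\<in>#M. cmod (z - x))" for M
    by (induction M) (auto simp: norm_mult)
  then show ?thesis using eq by simp
qed



lemma key:
  fixes F H :: "complex poly" and n :: nat and \<delta> \<rho> b D \<epsilon> :: real
  assumes n2: "n \<ge> 2" and degF: "degree F = n" and degH: "degree H = n"
   and lF: "lead_coeff F = 1" and lH: "lead_coeff H = 1"
   and dist: "\<forall>r. count (proots H) r \<le> 1"
   and sep: "\<forall>r\<in>#proots H. \<forall>r'\<in>#proots H. r \<noteq> r' \<longrightarrow> \<delta>*\<rho> \<le> cmod (r - r')"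
   and rb: "\<forall>r\<in>#proots H. cmod r \<le> \<rho> + b"
   and Q: "\<forall>z. cmod (poly F z - poly H z) \<le> D * (1 + cmod z)^(n-2)"
   and pos: "\<delta> > 0" "\<epsilon> > 0" "b \<ge> 0"
   and rho: "\<rho> \<ge> b + 1" "\<epsilon> < \<delta>*\<rho>/2" "D*(1+4/\<delta>)^(n-2) < \<epsilon>*(\<delta>*\<rho>/2)"
  shows "dF (proots H) (proots F) \<le> \<epsilon>"
proof -
  define R where "R = proots H"
  define S where "S = proots F"
  define K where "K = 1 + 4/\<delta>"
  have szR: "size R = n" unfolding R_def using degH size_proots_complex by simp
  have szS: "size S = n" unfolding S_def using degF size_proots_complex by simp
  have "4/\<delta> > 0" using pos by simp
  then have Kpos: "K > 0" unfolding K_def by linarith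
  have rhopos: "\<rho> > 0" using rho pos by linarith
  have num: "D * Y^(n-2) < \<epsilon>*(\<delta>*\<rho>/2) * (Y/K)^(n-2)" if "Y > 0" for Y
  proof -
    have "D * K^(n-2) * Y^(n-2) < \<epsilon>*(\<delta>*\<rho>/2) * Y^(n-2)"
      using rho(3) that unfolding K_def by (intro mult_strict_right_mono) auto
    then have "D * Y^(n-2) < \<epsilon>*(\<delta>*\<rho>/2) * Y^(n-2) / K^(n-2)"
      using Kpos by (simp add: field_simps)
    then show ?thesis by (simp add: power_divide)
  qed
  have Kbound: "(1 + cmod z)/K \<le> t" if "1 + cmod z \<le> t + 2*\<rho>" "\<delta>*\<rho>/2 \<le> t" for z t
  proof -
    have "2*\<rho> \<le> (4/\<delta>) * t" using that(2) pos by (simp add: field_simps)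
    then have "1 + cmod z \<le> K * t" using that(1) unfolding K_def by (simp add: algebra_simps)
    then show ?thesis using Kpos by (simp add: field_simps)
  qed
  have claim1: "\<forall>s\<in>#S. \<exists>r\<in>#R. cmod (s - r) \<le> \<epsilon>"
  proof (rule ballI, rule ccontr)
    fix s assume sS: "s \<in># S" and "\<not> (\<exists>r\<in>#R. cmod (s - r) \<le> \<epsilon>)"
    then have no: "\<forall>r\<in>#R. \<epsilon> < cmod (s - r)" by (simp add: not_le)
    obtain r0 where r0: "r0 \<in># R" "\<forall>r\<in>#R. r \<noteq> r0 \<longrightarrow> \<delta>*\<rho>/2 \<le> cmod (s - r)"
    proof (cases "\<exists>r\<in>#R. cmod (s - r) < \<delta>*\<rho>/2")
      case True
      then obtain r0 where r0: "r0 \<in># R" "cmod (s - r0) < \<delta>*\<rho>/2" by blast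
      have "\<delta>*\<rho>/2 \<le> cmod (s - r)" if "r \<in># R" "r \<noteq> r0" for r
      proof (rule ccontr)
        assume "\<not> \<delta>*\<rho>/2 \<le> cmod (s - r)"
        moreover have "cmod (r - r0) \<le> cmod (s - r) + cmod (s - r0)"
          by (metis norm_diff_triangle_le norm_minus_commute order_refl)
        ultimately have "cmod (r - r0) < \<delta>*\<rho>" using r0 by linarith
        with sep that r0 show False unfolding R_def by force
      qed
      then show ?thesis using that r0 by blast
    next
      case False
      obtain r0 where "r0 \<in># R" using szR n2 by (metis multiset_nonemptyE size_empty not_numeral_le_zero)
      then show ?thesis using that False by force
    qed
    define R' where "R' = R - {#r0#}"
    have RR: "R = add_mset r0 R'" using r0 R'_def by simp
    have szR': "size R' = Suc (n-2)" using szR RR n2 by simp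
    have ne: "r \<noteq> r0" if "r \<in># R'" for r
    proof
      assume "r = r0"
      then have "count R r0 \<ge> 2" using that RR by simp
      then show False using dist[rule_format, of r0] unfolding R_def by linarith
    qed
    have fac: "\<delta>*\<rho>/2 \<le> cmod (s - r) \<and> (1 + cmod s)/K \<le> cmod (s - r)" if "r \<in># R'" for r
    proof -
      have rR: "r \<in># R" using that RR by simp
      have a: "\<delta>*\<rho>/2 \<le> cmod (s - r)" using r0(2) rR ne[OF that] by blast
      have "cmod s \<le> cmod (s - r) + cmod r" using norm_triangle_sub[of s r] by (simp add: add.commute)
      moreover have "cmod r \<le> \<rho> + b" using rb rR unfolding R_def by blast
      ultimately have "1 + cmod s \<le> cmod (s - r) + 2*\<rho>" using rho by linarith
      then show ?thesis using a Kbound by blast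
    qed
    have "\<delta>*\<rho>/2 * ((1 + cmod s)/K)^(n-2) \<le> (\<Prod>r\<in>#R'. cmod (s - r))"
      by (rule prod_lower[OF szR']) (use fac pos rhopos Kpos in auto)
    moreover have "\<epsilon> \<le> cmod (s - r0)" using no r0 by auto
    ultimately have "\<epsilon> * (\<delta>*\<rho>/2 * ((1 + cmod s)/K)^(n-2)) \<le> cmod (s - r0) * (\<Prod>r\<in>#R'. cmod (s - r))"
      using pos rhopos Kpos by (intro mult_mono) auto
    also have "\<dots> = (\<Prod>r\<in>#R. cmod (s - r))" by (simp add: RR)
    also have "\<dots> = cmod (poly H s)" using monic_norm_poly[OF lH, of s] unfolding R_def by simp
    also have "\<dots> = cmod (poly F s - poly H s)"
    proof -
      have "F \<noteq> 0" using lF by auto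
      then have "poly F s = 0" using sS unfolding S_def by simp
      then show ?thesis by simp
    qed
    also have "\<dots> \<le> D * (1 + cmod s)^(n-2)" using Q by blast
    also have "\<dots> < \<epsilon>*(\<delta>*\<rho>/2) * ((1 + cmod s)/K)^(n-2)"
      by (rule num) (simp add: add_pos_nonneg)
    finally show False by simp
  qed
  have claim2: "\<forall>r\<in>#R. \<exists>s\<in>#S. cmod (s - r) \<le> \<epsilon>"
  proof (rule ballI, rule ccontr)
    fix r assume rR: "r \<in># R" and "\<not> (\<exists>s\<in>#S. cmod (s - r) \<le> \<epsilon>)"
    then have no: "\<forall>s\<in>#S. \<epsilon> < cmod (s - r)" by (simp add: not_le)
    have far: "\<delta>*\<rho>/2 \<le> cmod (r - s)" if "s \<in># S" for s
    proof -
      have "\<exists>r'\<in>#R. cmod (s - r') \<le> \<epsilon>" using claim1 that by simp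
      then obtain r' where r': "r' \<in># R" "cmod (s - r') \<le> \<epsilon>" by blast
      have "r \<noteq> r'"
      proof
        assume "r = r'"
        then have "\<epsilon> < cmod (s - r')" using no that by blast
        then show False using r'(2) by linarith
      qed
      then have "\<delta>*\<rho> \<le> cmod (r - r')" using sep rR r'(1) unfolding R_def by simp
      moreover have "cmod (r - r') \<le> cmod (r - s) + cmod (s - r')"
        using norm_triangle_ineq[of "r - s" "s - r'"] by simp
      ultimately show ?thesis using r' rho by linarith
    qed
    have Yb: "1 + cmod r \<le> t + 2*\<rho>" if "t \<ge> 0" for t
    proof -
      have "cmod r \<le> \<rho> + b" using rb rR unfolding R_def by blast
      then show ?thesis using rho that by linarith
    qed
    obtain s0 where s0: "s0 \<in># S" using szS n2 by (metis multiset_nonemptyE size_empty not_numeral_le_zero)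
    define S' where "S' = S - {#s0#}"
    have SS: "S = add_mset s0 S'" using s0 S'_def by simp
    have szS': "size S' = Suc (n-2)" using szS SS n2 by simp
    have fac: "\<delta>*\<rho>/2 \<le> cmod (r - s) \<and> (1 + cmod r)/K \<le> cmod (r - s)" if "s \<in># S'" for s
    proof -
      have "s \<in># S" using that SS by simp
      then have a: "\<delta>*\<rho>/2 \<le> cmod (r - s)" by (rule far)
      then show ?thesis using Kbound[OF Yb[of "cmod (r - s)"]] by simp
    qed
    have "\<delta>*\<rho>/2 * ((1 + cmod r)/K)^(n-2) \<le> (\<Prod>s\<in>#S'. cmod (r - s))"
      by (rule prod_lower[OF szS']) (use fac pos rhopos Kpos in auto)
    moreover have "\<epsilon> \<le> cmod (r - s0)" using far[OF s0] rho by linarith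
    ultimately have "\<epsilon> * (\<delta>*\<rho>/2 * ((1 + cmod r)/K)^(n-2)) \<le> cmod (r - s0) * (\<Prod>s\<in>#S'. cmod (r - s))"
      using pos rhopos Kpos by (intro mult_mono) auto
    also have "\<dots> = (\<Prod>s\<in>#S. cmod (r - s))" by (simp add: SS)
    also have "\<dots> = cmod (poly F r)" using monic_norm_poly[OF lF, of r] unfolding S_def by simp
    also have "\<dots> = cmod (poly F r - poly H r)"
    proof -
      have "H \<noteq> 0" using lH by auto
      then have "poly H r = 0" using rR unfolding R_def by simp
      then show ?thesis by simp
    qed
    also have "\<dots> \<le> D * (1 + cmod r)^(n-2)" using Q by blast
    also have "\<dots> < \<epsilon>*(\<delta>*\<rho>/2) * ((1 + cmod r)/K)^(n-2)"
      by (rule num) (simp add: add_pos_nonneg)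
    finally show False by simp
  qed
  have sep2: "\<forall>r\<in>#R. \<forall>r'\<in>#R. r \<noteq> r' \<longrightarrow> cmod (r - r') > 2*\<epsilon>"
  proof (intro ballI impI)
    fix r r' assume "r \<in># R" "r' \<in># R" "r \<noteq> r'"
    then have "\<delta>*\<rho> \<le> cmod (r - r')" using sep unfolding R_def by blast
    then show "cmod (r - r') > 2*\<epsilon>" using rho by linarith
  qed
  obtain \<phi> where "image_mset \<phi> S = R" "\<forall>s\<in>#S. cmod (\<phi> s - s) \<le> \<epsilon>"
    using match_image[of R S \<epsilon>] dist szR szS claim1 claim2 sep2 unfolding R_def by auto
  then show ?thesis using dF_le[of \<phi> S R \<epsilon>] szR n2 unfolding R_def S_def by auto
qed



lemma polyG: "poly (monom 1 n + [:A:]) z = z^n + (A::complex)"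
  by (simp add: poly_monom)

lemma degG: assumes "n \<ge> 1" shows "degree (monom 1 n + [:A::complex:]) = n"
  and "lead_coeff (monom 1 n + [:A::complex:]) = 1"
proof -
  show d: "degree (monom 1 n + [:A::complex:]) = n"
    using assms by (subst degree_add_eq_left) (auto simp: degree_monom_eq)
  show "lead_coeff (monom 1 n + [:A::complex:]) = 1"
  proof -
    have "coeff [:A:] n = 0" using assms by (cases n) auto
    then show ?thesis unfolding d by (simp add: coeff_monom)
  qed
qed

lemma shiftH:
  assumes "n \<ge> 1"
  shows "poly (shift_poly \<beta> (monom 1 n + [:A:])) z = (\<beta> + z)^n + A"
    and "degree (shift_poly \<beta> (monom 1 n + [:A:])) = n"
    and "lead_coeff (shift_poly \<beta> (monom 1 n + [:A:])) = 1"
    and "poly (pderiv (shift_poly \<beta> (monom 1 n + [:A:]))) z = of_nat n * (\<beta> + z)^(n-1)"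
proof -
  show "poly (shift_poly \<beta> (monom 1 n + [:A:])) z = (\<beta> + z)^n + A"
    by (simp add: shift_poly_def poly_pcompose poly_monom)
  show "degree (shift_poly \<beta> (monom 1 n + [:A:])) = n"
    using degG[OF assms] by (simp add: shift_poly_def degree_pcompose)
  show "lead_coeff (shift_poly \<beta> (monom 1 n + [:A:])) = 1"
    using degG[OF assms] unfolding shift_poly_def by (subst lead_coeff_comp) auto
  show "poly (pderiv (shift_poly \<beta> (monom 1 n + [:A:]))) z = of_nat n * (\<beta> + z)^(n-1)"
    by (simp add: shift_poly_def pderiv_pcompose poly_pcompose pderiv_add pderiv_monom poly_monom pderiv_pCons)
qed

lemma degF:
  fixes c :: "nat \<Rightarrow> complex"
  assumes "n \<ge> 2"
  shows "degree (monom 1 n + (\<Sum>k = 1..n - 1. monom (c k) k) + [:A:]) = n"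
    and "lead_coeff (monom 1 n + (\<Sum>k = 1..n - 1. monom (c k) k) + [:A:]) = 1"
    and "poly (monom 1 n + (\<Sum>k = 1..n - 1. monom (c k) k) + [:A:]) z = z^n + (\<Sum>k = 1..n - 1. c k * z^k) + A"
proof -
  have ds: "degree (\<Sum>k = 1..n - 1. monom (c k) k) < n"
  proof -
    have "degree (\<Sum>k = 1..n - 1. monom (c k) k) \<le> n - 1"
      by (rule degree_sum_le) (auto intro: order_trans[OF degree_monom_le])
    then show ?thesis using assms by linarith
  qed
  have d1: "degree (monom 1 n + (\<Sum>k = 1..n - 1. monom (c k) k)) = n"
    using ds by (subst degree_add_eq_left) (auto simp: degree_monom_eq)
  show d: "degree (monom 1 n + (\<Sum>k = 1..n - 1. monom (c k) k) + [:A:]) = n"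
    using d1 assms by (subst degree_add_eq_left) auto
  have "coeff (\<Sum>k = 1..n - 1. monom (c k) k) n = 0" using ds by (simp add: coeff_eq_0)
  moreover have "coeff [:A:] n = 0" using assms by (cases n) auto
  ultimately show "lead_coeff (monom 1 n + (\<Sum>k = 1..n - 1. monom (c k) k) + [:A:]) = 1"
    unfolding d by simp
  show "poly (monom 1 n + (\<Sum>k = 1..n - 1. monom (c k) k) + [:A:]) z = z^n + (\<Sum>k = 1..n - 1. c k * z^k) + A"
    by (simp add: poly_sum poly_monom)
qed

lemma finite_W: "n \<ge> 1 \<Longrightarrow> finite {w::complex. w^n = -1}"
proof -
  assume "n \<ge> 1"
  then have "finite {w::complex. w^(2*n) = 1}" by (intro finite_roots_unity) auto
  moreover have "{w::complex. w^n = -1} \<subseteq> {w. w^(2*n) = 1}"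
    by (auto simp: power_mult mult.commute[of 2 n])
  ultimately show ?thesis by (rule finite_subset[rotated])
qed

lemma sep_const:
  fixes W :: "complex set"
  assumes "finite W"
  shows "\<exists>\<delta>>0. \<forall>w\<in>W. \<forall>w'\<in>W. w \<noteq> w' \<longrightarrow> \<delta> \<le> cmod (w - w')"
proof -
  define DS where "DS = (\<lambda>(w,w'). cmod (w - w')) ` {(w,w'). w \<in> W \<and> w' \<in> W \<and> w \<noteq> w'}"
  have fin: "finite DS" unfolding DS_def
    by (rule finite_imageI, rule finite_subset[of _ "W \<times> W"]) (use assms in auto)
  define \<delta> where "\<delta> = Min (insert 1 DS)"
  have "\<delta> > 0" unfolding \<delta>_def using fin by (subst Min_gr_iff) (auto simp: DS_def)
  moreover have "\<delta> \<le> cmod (w - w')" if "w \<in> W" "w' \<in> W" "w \<noteq> w'" for w w'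
  proof -
    have "cmod (w - w') \<in> DS" unfolding DS_def using that by force
    then show ?thesis unfolding \<delta>_def using fin by (intro Min_le) auto
  qed
  ultimately show ?thesis by blast
qed

lemma sum_bound:
  fixes e :: "nat \<Rightarrow> complex"
  assumes "\<forall>k\<in>A. k \<le> m"
  shows "cmod (\<Sum>k\<in>A. e k * z^k) \<le> (\<Sum>k\<in>A. cmod (e k)) * (1 + cmod z)^m"
proof -
  have "cmod (\<Sum>k\<in>A. e k * z^k) \<le> (\<Sum>k\<in>A. cmod (e k * z^k))" by (rule norm_sum)
  also have "\<dots> \<le> (\<Sum>k\<in>A. cmod (e k) * (1 + cmod z)^m)"
  proof (rule sum_mono)
    fix k assume k: "k \<in> A"
    have "cmod z ^ k \<le> (1 + cmod z)^k" by (rule power_mono) auto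
    also have "\<dots> \<le> (1 + cmod z)^m" using assms k by (intro power_increasing) auto
    finally show "cmod (e k * z^k) \<le> cmod (e k) * (1 + cmod z)^m"
      by (simp add: norm_mult norm_power mult_left_mono)
  qed
  also have "\<dots> = (\<Sum>k\<in>A. cmod (e k)) * (1 + cmod z)^m" by (simp add: sum_distrib_right)
  finally show ?thesis .
qed



lemma Qbound:
  fixes c :: "nat \<Rightarrow> complex" and m :: nat
  shows "\<exists>D. \<forall>z. cmod ((z^Suc (Suc m) + (\<Sum>k=1..Suc m. c k * z^k)) - (c (Suc m) / of_nat (Suc (Suc m)) + z)^Suc (Suc m))
             \<le> D * (1 + cmod z)^m"
proof -
  define n where "n = Suc (Suc m)"
  define \<beta> where "\<beta> = c (Suc m) / of_nat n"
  define e where "e k = of_nat (n choose k) * \<beta>^(n-k)" for k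
  define D where "D = (\<Sum>k=1..m. cmod (c k)) + (\<Sum>k\<le>m. cmod (e k))"
  have n0: "(of_nat n :: complex) \<noteq> 0" unfolding n_def by (simp only: of_nat_eq_0_iff)
  have nb: "of_nat n * \<beta> = c (Suc m)" unfolding \<beta>_def using n0 by simp
  have "(\<beta> + z)^n = (\<Sum>k\<le>n. of_nat (n choose k) * z^k * \<beta>^(n-k))" for z
    using binomial_ring[of z \<beta> n] by (simp add: add.commute)
  also have "\<dots> z = (\<Sum>k\<le>m. e k * z^k) + c (Suc m) * z^Suc m + z^n" for z
    unfolding n_def e_def by (simp add: nb[symmetric, unfolded n_def] algebra_simps)
  finally have bin: "(\<beta> + z)^n = (\<Sum>k\<le>m. e k * z^k) + c (Suc m) * z^Suc m + z^n" for z .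
  have cs: "(\<Sum>k=1..Suc m. c k * z^k) = (\<Sum>k=1..m. c k * z^k) + c (Suc m) * z^Suc m" for z
    by (simp add: sum.cl_ivl_Suc)
  have "cmod ((z^n + (\<Sum>k=1..Suc m. c k * z^k)) - (\<beta> + z)^n) \<le> D * (1 + cmod z)^m" for z
  proof -
    have "(z^n + (\<Sum>k=1..Suc m. c k * z^k)) - (\<beta> + z)^n = (\<Sum>k=1..m. c k * z^k) - (\<Sum>k\<le>m. e k * z^k)"
      using bin[of z] cs[of z] by simp
    then have "cmod ((z^n + (\<Sum>k=1..Suc m. c k * z^k)) - (\<beta> + z)^n)
        \<le> cmod (\<Sum>k=1..m. c k * z^k) + cmod (\<Sum>k\<le>m. e k * z^k)"
      by (simp only: norm_triangle_ineq4)
    also have "\<dots> \<le> (\<Sum>k=1..m. cmod (c k)) * (1 + cmod z)^m + (\<Sum>k\<le>m. cmod (e k)) * (1 + cmod z)^m"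
      by (intro add_mono sum_bound) auto
    finally show ?thesis unfolding D_def by (simp add: algebra_simps)
  qed
  then show ?thesis unfolding n_def \<beta>_def by blast
qed



theorem corollary4p6:
  fixes n :: nat and c :: "nat \<Rightarrow> complex"
  assumes "n \<ge> 2"
  shows "((\<lambda>a::complex.
            dF (proots (shift_poly (c (n - 1) / of_nat n) (monom 1 n + [:a ^ n:])))
               (proots (monom 1 n + (\<Sum>k = 1..n - 1. monom (c k) k) + [:a ^ n:])))
          \<longlongrightarrow> 0) at_infinity"
proof -
  obtain m where nm: "n = Suc (Suc m)" using assms by (metis add_2_eq_Suc le_Suc_ex)
  have n1: "n \<ge> 1" using assms by simp
  define \<beta> where "\<beta> = c (n - 1) / of_nat n"
  obtain D where D0: "\<forall>z. cmod ((z^Suc (Suc m) + (\<Sum>k=1..Suc m. c k * z^k)) - (c (Suc m) / of_nat (Suc (Suc m)) + z)^Suc (Suc m))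
             \<le> D * (1 + cmod z)^m" using Qbound[of m c] by blast
  have D: "cmod ((z^n + (\<Sum>k=1..n-1. c k * z^k)) - (\<beta> + z)^n) \<le> D * (1 + cmod z)^(n-2)" for z
    using D0[rule_format, of z] unfolding \<beta>_def nm by simp
  obtain \<delta> where \<delta>: "\<delta> > 0" "\<forall>w\<in>{w::complex. w^n = -1}. \<forall>w'\<in>{w::complex. w^n = -1}. w \<noteq> w' \<longrightarrow> \<delta> \<le> cmod (w - w')"
    using sep_const[OF finite_W[OF n1]] by blast
  define H where "H a = shift_poly \<beta> (monom 1 n + [:a ^ n:])" for a
  define F where "F a = monom 1 n + (\<Sum>k = 1..n - 1. monom (c k) k) + [:a ^ n:]" for a
  have polyH: "poly (H a) z = (\<beta> + z)^n + a^n" for a z unfolding H_def using shiftH(1)[OF n1] by blast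
  have Hroot: "(\<beta> + r)^n = - (a^n)" if "r \<in># proots (H a)" for a r
  proof -
    have "H a \<noteq> 0" using shiftH(3)[OF n1, of \<beta> "a^n"] unfolding H_def by auto
    then have "poly (H a) r = 0" using that by simp
    then show ?thesis using polyH by (simp add: eq_neg_iff_add_eq_0)
  qed
  have props: "dF (proots (H a)) (proots (F a)) \<le> \<epsilon>"
    if a0: "a \<noteq> 0" and pos: "\<epsilon> > 0" and rho: "cmod a \<ge> cmod \<beta> + 1" "\<epsilon> < \<delta>*cmod a/2"
        "D*(1+4/\<delta>)^(n-2) < \<epsilon>*(\<delta>*cmod a/2)" for a \<epsilon>
  proof (rule key[OF assms])
    show "degree (F a) = n" "lead_coeff (F a) = 1" unfolding F_def using degF[OF assms] by blast+
    show "degree (H a) = n" "lead_coeff (H a) = 1" unfolding H_def using shiftH[OF n1] by blast+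
    show "\<forall>z. cmod (poly (F a) z - poly (H a) z) \<le> D * (1 + cmod z)^(n-2)"
    proof
      fix z
      have "poly (F a) z - poly (H a) z = (z^n + (\<Sum>k=1..n-1. c k * z^k)) - (\<beta> + z)^n"
        unfolding F_def polyH degF(3)[OF assms] by simp
      then show "cmod (poly (F a) z - poly (H a) z) \<le> D * (1 + cmod z)^(n-2)" using D by simp
    qed
    show "\<forall>r. count (proots (H a)) r \<le> 1"
    proof -
      have "rsquarefree (H a)"
      proof (subst rsquarefree_roots, intro allI notI)
        fix z assume z: "poly (H a) z = 0 \<and> poly (pderiv (H a)) z = 0"
        have "of_nat n * (\<beta> + z)^(n-1) = 0" using z shiftH(4)[OF n1] unfolding H_def by metis
        then have "\<beta> + z = 0" using n1 by simp
        then have "a^n = 0" using z polyH[of a z] n1 by (simp add: zero_power)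
        then show False using a0 by simp
      qed
      then show ?thesis
        unfolding rsquarefree_def by (metis count_proots le_refl zero_le_one)
    qed
    show "\<forall>r\<in>#proots (H a). \<forall>r'\<in>#proots (H a). r \<noteq> r' \<longrightarrow> \<delta>*cmod a \<le> cmod (r - r')"
    proof (intro ballI impI)
      fix r r' assume r: "r \<in># proots (H a)" and r': "r' \<in># proots (H a)" and ne: "r \<noteq> r'"
      define w where "w = (\<beta> + r)/a"
      define w' where "w' = (\<beta> + r')/a"
      have "w^n = -1" unfolding w_def using Hroot[OF r] a0 by (simp add: power_divide)
      moreover have "w'^n = -1" unfolding w'_def using Hroot[OF r'] a0 by (simp add: power_divide)
      moreover have "w \<noteq> w'" unfolding w_def w'_def using ne a0 by (simp add: divide_cancel_right)
      ultimately have "\<delta> \<le> cmod (w - w')" using \<delta>(2) by blast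
      moreover have "r - r' = a * (w - w')" unfolding w_def w'_def using a0 by (simp add: field_simps)
      ultimately show "\<delta>*cmod a \<le> cmod (r - r')" using a0 by (simp add: norm_mult mult.commute)
    qed
    show "\<forall>r\<in>#proots (H a). cmod r \<le> cmod a + cmod \<beta>"
    proof
      fix r assume r: "r \<in># proots (H a)"
      have "cmod (\<beta> + r) ^ n = cmod a ^ n" using Hroot[OF r] by (metis norm_minus_cancel norm_power)
      then have e: "cmod (\<beta> + r) = cmod a" using n1 by (simp add: power_eq_iff_eq_base)
      have "cmod r \<le> cmod (\<beta> + r) + cmod \<beta>" using norm_triangle_ineq4[of "\<beta> + r" \<beta>] by simp
      then show "cmod r \<le> cmod a + cmod \<beta>" using e by simp
    qed
  qed (use \<delta> pos rho in auto)
  show ?thesis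
  proof (rule tendstoI)
    fix \<epsilon>0 :: real assume e0: "\<epsilon>0 > 0"
    define \<epsilon> where "\<epsilon> = \<epsilon>0/2"
    have ep: "\<epsilon> > 0" "\<epsilon> < \<epsilon>0" using e0 unfolding \<epsilon>_def by auto
    define B where "B = max (cmod \<beta> + 1) (max (2*\<epsilon>/\<delta> + 1) (2*(D*(1+4/\<delta>)^(n-2))/(\<epsilon>*\<delta>) + 1))"
    have "\<forall>a. B \<le> norm a \<longrightarrow> dist (dF (proots (H a)) (proots (F a))) 0 < \<epsilon>0"
    proof (intro allI impI)
      fix a :: complex assume aB: "B \<le> norm a"
      have r1: "cmod a \<ge> cmod \<beta> + 1" using aB unfolding B_def by auto
      moreover have "cmod \<beta> \<ge> 0" by simp
      ultimately have a0: "a \<noteq> 0" by (metis norm_zero not_one_le_zero le_add_same_cancel2 order_trans)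
      have r2: "2*\<epsilon>/\<delta> < cmod a" using aB unfolding B_def by auto
      then have r2': "\<epsilon> < \<delta>*cmod a/2" using \<delta>(1) by (simp add: field_simps)
      have r3: "2*(D*(1+4/\<delta>)^(n-2))/(\<epsilon>*\<delta>) < cmod a" using aB unfolding B_def by auto
      then have r3': "D*(1+4/\<delta>)^(n-2) < \<epsilon>*(\<delta>*cmod a/2)" using \<delta>(1) ep by (simp add: field_simps)
      have le: "dF (proots (H a)) (proots (F a)) \<le> \<epsilon>" by (rule props[OF a0 ep(1) r1 r2' r3'])
      have ge: "dF (proots (H a)) (proots (F a)) \<ge> 0"
        by (rule dF_ge) (use shiftH(2)[OF n1] assms size_proots_complex in \<open>simp add: H_def\<close>)
      show "dist (dF (proots (H a)) (proots (F a))) 0 < \<epsilon>0" using le ge ep by simp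
    qed
    then show "\<forall>\<^sub>F a in at_infinity. dist (dF (proots (shift_poly (c (n - 1) / of_nat n) (monom 1 n + [:a ^ n:])))
               (proots (monom 1 n + (\<Sum>k = 1..n - 1. monom (c k) k) + [:a ^ n:]))) 0 < \<epsilon>0"
      unfolding eventually_at_infinity H_def F_def \<beta>_def by blast
  qed
qed


end
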